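(* Let $(\Omega,\Sigma,\mu)$ be a finite measure space and let $X(\mu)$ be a strictly rectangular function space. For every $f\in L^0(\mu)$, the norm of $X(\mu)$ is strictly monotone on $S(f,X(\mu))$ (i.e. $\|g\|\le\|h\|$ whenever $g,h\in S(f,X(\mu))$ and $0\le g\le h$), and $$\||g|-|h|\|\le 4\|g-h\|\quad\text{for all } g,h\in S(f,X(\mu)).$$ If moreover $f\in X(\mu)$, then for all $s\in S(\Sigma)$ and $g\in S(f,X(\mu))$, $$\||sg|\|\le\|s\|_\infty\||g|\|,\qquad \|sg\|\le 4\|s\|_\infty\|g\|.$$
   Context: $L^0(\mu)$ is the space of equivalence classes (modulo $\mu$-a.e. equality) of real $\Sigma$-measurable functions, ordered $\mu$-a.e. A strictly rectangular function space is a vector subspace $X(\mu)\subseteq L^0(\mu)$ with a norm such that $\chi_Ah\in X(\mu)$ and $\|\chi_Ah\|\le\|h\|$ for all $h\in X(\mu)$, $A\in\Sigma$. $S(\Sigma)$ is the space of real $\Sigma$-simple functions, $\|\cdot\|_\infty$ the $L^\infty(\mu)$ norm. For $f\in L^0(\mu)$: $\Sigma_f=\{A\in\Sigma: f\chi_A\in X(\mu)\}$, $S(f,X(\mu))=\operatorname{span}\{f\chi_A:A\in\Sigma_f\}$. *)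

theory Defs
  imports "HOL-Analysis.Analysis" "HOL-Probability.Essential_Supremum"
begin

text \<open>Elements of L0(M) are represented by Borel measurable real functions; the
  function space X is a set of such functions closed under a.e. equality, and the
  norm N is invariant under a.e. equality (so it is really a norm on classes).\<close>

definition strictly_rectangular_fs ::
  "'a measure \<Rightarrow> ('a \<Rightarrow> real) set \<Rightarrow> (('a \<Rightarrow> real) \<Rightarrow> real) \<Rightarrow> bool" where
  "strictly_rectangular_fs M X N \<longleftrightarrow>
     X \<subseteq> borel_measurable M \<and>
     (\<forall>f\<in>X. \<forall>g\<in>borel_measurable M. (AE x in M. f x = g x) \<longrightarrow> g \<in> X \<and> N g = N f) \<and>
     (\<lambda>x. 0) \<in> X \<and>
     (\<forall>f\<in>X. \<forall>g\<in>X. (\<lambda>x. f x + g x) \<in> X) \<and>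
     (\<forall>f\<in>X. \<forall>c::real. (\<lambda>x. c * f x) \<in> X) \<and>
     (\<forall>f\<in>X. 0 \<le> N f) \<and>
     (\<forall>f\<in>X. N f = 0 \<longleftrightarrow> (AE x in M. f x = 0)) \<and>
     (\<forall>f\<in>X. \<forall>c::real. N (\<lambda>x. c * f x) = \<bar>c\<bar> * N f) \<and>
     (\<forall>f\<in>X. \<forall>g\<in>X. N (\<lambda>x. f x + g x) \<le> N f + N g) \<and>
     (\<forall>h\<in>X. \<forall>A\<in>sets M. (\<lambda>x. indicator A x * h x) \<in> X \<and>
                         N (\<lambda>x. indicator A x * h x) \<le> N h)"

definition Sigma_f :: "'a measure \<Rightarrow> ('a \<Rightarrow> real) set \<Rightarrow> ('a \<Rightarrow> real) \<Rightarrow> 'a set set" where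
  "Sigma_f M X f = {A \<in> sets M. (\<lambda>x. f x * indicator A x) \<in> X}"

definition S_fX :: "'a measure \<Rightarrow> ('a \<Rightarrow> real) set \<Rightarrow> ('a \<Rightarrow> real) \<Rightarrow> ('a \<Rightarrow> real) set" where
  "S_fX M X f = {g \<in> borel_measurable M. \<exists>(n::nat) (c::nat \<Rightarrow> real) (A::nat \<Rightarrow> 'a set).
      (\<forall>i<n. A i \<in> Sigma_f M X f) \<and>
      (AE x in M. g x = (\<Sum>i<n. c i * (f x * indicator (A i) x)))}"

definition Linf_norm :: "'a measure \<Rightarrow> ('a \<Rightarrow> real) \<Rightarrow> real" where
  "Linf_norm M s = real_of_ereal (esssup M (\<lambda>x. ereal \<bar>s x\<bar>))"

end

theory Submission
  imports Defs
begin

lemma srf_ae: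
  assumes "strictly_rectangular_fs M X N" "f \<in> X" "g \<in> borel_measurable M"
    "AE x in M. f x = g x"
  shows "g \<in> X \<and> N g = N f"
  using assms unfolding strictly_rectangular_fs_def by blast

lemma srf_meas: "strictly_rectangular_fs M X N \<Longrightarrow> f \<in> X \<Longrightarrow> f \<in> borel_measurable M"
  unfolding strictly_rectangular_fs_def by blast

lemma srf_add: "strictly_rectangular_fs M X N \<Longrightarrow> f \<in> X \<Longrightarrow> g \<in> X \<Longrightarrow>
   (\<lambda>x. f x + g x) \<in> X \<and> N (\<lambda>x. f x + g x) \<le> N f + N g"
  unfolding strictly_rectangular_fs_def by blast

lemma srf_smult: "strictly_rectangular_fs M X N \<Longrightarrow> f \<in> X \<Longrightarrow>
   (\<lambda>x. c * f x) \<in> X \<and> N (\<lambda>x. c * f x) = \<bar>c\<bar> * N f"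
  unfolding strictly_rectangular_fs_def by blast

lemma srf_nonneg: "strictly_rectangular_fs M X N \<Longrightarrow> f \<in> X \<Longrightarrow> 0 \<le> N f"
  unfolding strictly_rectangular_fs_def by blast

lemma srf_ind: "strictly_rectangular_fs M X N \<Longrightarrow> h \<in> X \<Longrightarrow> A \<in> sets M \<Longrightarrow>
   (\<lambda>x. indicator A x * h x) \<in> X \<and> N (\<lambda>x. indicator A x * h x) \<le> N h"
  unfolding strictly_rectangular_fs_def by blast

lemma srf_zero:
  assumes "strictly_rectangular_fs M X N" "g \<in> borel_measurable M" "AE x in M. g x = 0"
  shows "g \<in> X \<and> N g = 0"
proof -
  have z: "(\<lambda>x. 0::real) \<in> X" "N (\<lambda>x. 0) = 0"
    using assms(1) unfolding strictly_rectangular_fs_def by auto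
  show ?thesis using srf_ae[OF assms(1) z(1) assms(2)] assms(3) z(2)
    by (auto elim: eventually_mono)
qed

lemma core_pos:
  assumes srf: "strictly_rectangular_fs M X N" and h: "h \<in> X"
  shows "\<forall>s c. s \<in> borel_measurable M \<longrightarrow> finite (s ` space M) \<longrightarrow>
      card {v\<in>s ` space M. 0 < v} \<le> n \<longrightarrow> 0 \<le> c \<longrightarrow>
      (\<forall>x\<in>space M. 0 \<le> s x \<and> s x \<le> c) \<longrightarrow>
      (\<lambda>x. s x * h x) \<in> X \<and> N (\<lambda>x. s x * h x) \<le> c * N h"
proof (induction n)
  case 0
  have hm: "h \<in> borel_measurable M" using srf_meas[OF srf h] .
  show ?case
  proof (intro allI impI)
    fix s :: "'a \<Rightarrow> real" and c :: real
    assume sm: "s \<in> borel_measurable M" and fin: "finite (s ` space M)"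
      and card: "card {v\<in>s ` space M. 0 < v} \<le> 0" and c: "0 \<le> c"
      and b: "\<forall>x\<in>space M. 0 \<le> s x \<and> s x \<le> c"
    have "{v\<in>s ` space M. 0 < v} = {}" using card fin by simp
    then have "\<forall>x\<in>space M. s x = 0" using b by force
    then have "AE x in M. s x * h x = 0" by auto
    from srf_zero[OF srf _ this] sm hm
    show "(\<lambda>x. s x * h x) \<in> X \<and> N (\<lambda>x. s x * h x) \<le> c * N h"
      using c srf_nonneg[OF srf h] by auto
  qed
next
  case (Suc n)
  have hm: "h \<in> borel_measurable M" using srf_meas[OF srf h] .
  show ?case
  proof (intro allI impI)
    fix s :: "'a \<Rightarrow> real" and c :: real
    assume sm: "s \<in> borel_measurable M" and fin: "finite (s ` space M)"
      and card: "card {v\<in>s ` space M. 0 < v} \<le> Suc n" and c: "0 \<le> c"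
      and b: "\<forall>x\<in>space M. 0 \<le> s x \<and> s x \<le> c"
    define P where "P = {v\<in>s ` space M. 0 < v}"
    have finP: "finite P" using fin unfolding P_def by simp
    show "(\<lambda>x. s x * h x) \<in> X \<and> N (\<lambda>x. s x * h x) \<le> c * N h"
    proof (cases "P = {}")
      case True
      then have "\<forall>x\<in>space M. s x = 0" using b unfolding P_def by force
      then have "AE x in M. s x * h x = 0" by auto
      from srf_zero[OF srf _ this] sm hm
      show ?thesis using c srf_nonneg[OF srf h] by auto
    next
      case False
      define m where "m = Min P"
      have mP: "m \<in> P" using False finP unfolding m_def by simp
      have mpos: "0 < m" using mP unfolding P_def by auto
      have mle: "\<And>v. v \<in> P \<Longrightarrow> m \<le> v" using finP unfolding m_def by simp
      have mc: "m \<le> c" using mP b unfolding P_def by auto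
      define s' where "s' x = (if 0 < s x then s x - m else 0)" for x
      define C where "C = {x\<in>space M. 0 < s x}"
      have Cm: "C \<in> sets M" unfolding C_def using sm by measurable
      have s'm: "s' \<in> borel_measurable M" unfolding s'_def using sm by measurable
      have fin': "finite (s' ` space M)"
        by (rule finite_subset[of _ "(\<lambda>v. if 0 < v then v - m else 0) ` s ` space M"])
           (use fin in \<open>auto simp: s'_def\<close>)
      have sub: "{v\<in>s' ` space M. 0 < v} \<subseteq> (\<lambda>v. v - m) ` (P - {m})"
      proof
        fix v assume "v \<in> {v\<in>s' ` space M. 0 < v}"
        then obtain x where x: "x \<in> space M" "v = s' x" "0 < v" by auto
        then have "0 < s x" "v = s x - m" by (auto simp: s'_def split: if_splits)
        then show "v \<in> (\<lambda>v. v - m) ` (P - {m})" using x unfolding P_def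
          by (intro image_eqI[of _ _ "s x"]) auto
      qed
      have "card {v\<in>s' ` space M. 0 < v} \<le> card ((\<lambda>v. v - m) ` (P - {m}))"
        by (rule card_mono[OF _ sub]) (use finP in auto)
      also have "\<dots> \<le> card (P - {m})" by (rule card_image_le) (use finP in auto)
      also have "\<dots> = card P - 1" using mP finP by simp
      also have "\<dots> \<le> n" using card unfolding P_def by simp
      finally have card': "card {v\<in>s' ` space M. 0 < v} \<le> n" .
      have b': "\<forall>x\<in>space M. 0 \<le> s' x \<and> s' x \<le> c - m"
      proof
        fix x assume x: "x \<in> space M"
        show "0 \<le> s' x \<and> s' x \<le> c - m"
        proof (cases "0 < s x")
          case True
          then have "s x \<in> P" using x unfolding P_def by auto
          then show ?thesis using True mle[of "s x"] b x by (auto simp: s'_def)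
        qed (use mc in \<open>auto simp: s'_def\<close>)
      qed
      have IH: "(\<lambda>x. s' x * h x) \<in> X \<and> N (\<lambda>x. s' x * h x) \<le> (c - m) * N h"
        using Suc.IH[rule_format, of s' "c - m", OF s'm fin' card'] mc b' by auto
      have I: "(\<lambda>x. indicator C x * h x) \<in> X \<and> N (\<lambda>x. indicator C x * h x) \<le> N h"
        using srf_ind[OF srf h Cm] .
      have I2: "(\<lambda>x. m * (indicator C x * h x)) \<in> X \<and> N (\<lambda>x. m * (indicator C x * h x)) \<le> m * N h"
        using srf_smult[OF srf I[THEN conjunct1], of m] I mpos
        by (auto intro: mult_left_mono)
      have S: "(\<lambda>x. m * (indicator C x * h x) + s' x * h x) \<in> X \<and>
          N (\<lambda>x. m * (indicator C x * h x) + s' x * h x) \<le> c * N h"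
        using srf_add[OF srf I2[THEN conjunct1] IH[THEN conjunct1]] I2 IH
        by (auto simp: algebra_simps)
      have "AE x in M. m * (indicator C x * h x) + s' x * h x = s x * h x"
        by (rule AE_I2) (use b in \<open>force simp: C_def s'_def indicator_def algebra_simps\<close>)
      from srf_ae[OF srf S[THEN conjunct1] _ this] sm hm S
      show ?thesis by auto
    qed
  qed
qed

lemma core_pos':
  assumes srf: "strictly_rectangular_fs M X N" and h: "h \<in> X"
    and sm: "s \<in> borel_measurable M" and fin: "finite (s ` space M)" and c: "0 \<le> c"
    and b: "\<And>x. x \<in> space M \<Longrightarrow> 0 \<le> s x \<and> s x \<le> c"
  shows "(\<lambda>x. s x * h x) \<in> X \<and> N (\<lambda>x. s x * h x) \<le> c * N h"
  using core_pos[OF srf h, of "card {v\<in>s ` space M. 0 < v}"] sm fin c b by blast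

lemma core_signed:
  assumes srf: "strictly_rectangular_fs M X N" and h: "h \<in> X"
    and sm: "s \<in> borel_measurable M" and fin: "finite (s ` space M)" and c: "0 \<le> c"
    and b: "\<And>x. x \<in> space M \<Longrightarrow> \<bar>s x\<bar> \<le> c"
  shows "(\<lambda>x. s x * h x) \<in> X \<and> N (\<lambda>x. s x * h x) \<le> 2 * c * N h"
proof -
  define sp where "sp x = max (s x) 0" for x
  define sn where "sn x = max (- s x) 0" for x
  have spm: "sp \<in> borel_measurable M" unfolding sp_def using sm by measurable
  have snm: "sn \<in> borel_measurable M" unfolding sn_def using sm by measurable
  have fp: "finite (sp ` space M)"
    by (rule finite_subset[of _ "(\<lambda>v. max v 0) ` s ` space M"]) (use fin in \<open>auto simp: sp_def\<close>)
  have fn: "finite (sn ` space M)"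
    by (rule finite_subset[of _ "(\<lambda>v. max (-v) 0) ` s ` space M"]) (use fin in \<open>auto simp: sn_def\<close>)
  have P: "(\<lambda>x. sp x * h x) \<in> X \<and> N (\<lambda>x. sp x * h x) \<le> c * N h"
    by (rule core_pos'[OF srf h spm fp c]) (use b in \<open>force simp: sp_def\<close>)
  have Q: "(\<lambda>x. sn x * h x) \<in> X \<and> N (\<lambda>x. sn x * h x) \<le> c * N h"
    by (rule core_pos'[OF srf h snm fn c]) (use b in \<open>force simp: sn_def\<close>)
  have Q2: "(\<lambda>x. (-1) * (sn x * h x)) \<in> X \<and> N (\<lambda>x. (-1) * (sn x * h x)) \<le> c * N h"
    using srf_smult[OF srf Q[THEN conjunct1], of "-1"] Q by auto
  have S: "(\<lambda>x. sp x * h x + (-1) * (sn x * h x)) \<in> X \<and>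
      N (\<lambda>x. sp x * h x + (-1) * (sn x * h x)) \<le> 2 * c * N h"
    using srf_add[OF srf P[THEN conjunct1] Q2[THEN conjunct1]] P Q2 by auto
  have e: "(\<lambda>x. sp x * h x + (-1) * (sn x * h x)) = (\<lambda>x. s x * h x)"
    by (auto simp: sp_def sn_def max_def algebra_simps)
  show ?thesis using S unfolding e .
qed

lemma sum_in_X:
  fixes n :: nat
  assumes srf: "strictly_rectangular_fs M X N" and A: "\<forall>i<n. A i \<in> Sigma_f M X f"
  shows "(\<lambda>x. \<Sum>i<n. c i * (f x * indicator (A i) x)) \<in> X"
  using A
proof (induction n)
  case 0
  then show ?case using srf unfolding strictly_rectangular_fs_def by simp
next
  case (Suc n)
  have a: "(\<lambda>x. \<Sum>i<n. c i * (f x * indicator (A i) x)) \<in> X" using Suc by auto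
  have "(\<lambda>x. f x * indicator (A n) x) \<in> X" using Suc.prems unfolding Sigma_f_def by auto
  then have b: "(\<lambda>x. c n * (f x * indicator (A n) x)) \<in> X" using srf_smult[OF srf] by blast
  show ?case using srf_add[OF srf a b] by simp
qed

lemma S_repr:
  assumes srf: "strictly_rectangular_fs M X N" and g: "g \<in> S_fX M X f"
  shows "g \<in> X \<and> g \<in> borel_measurable M \<and>
    (\<exists>\<phi>. simple_function M \<phi> \<and> (AE x in M. g x = \<phi> x * f x))"
proof -
  obtain n :: nat and c A where gm: "g \<in> borel_measurable M" and A: "\<forall>i<n. A i \<in> Sigma_f M X f"
    and ae: "AE x in M. g x = (\<Sum>i<n. c i * (f x * indicator (A i) x))"
    using g unfolding S_fX_def by blast
  have "AE x in M. (\<Sum>i<n. c i * (f x * indicator (A i) x)) = g x" using ae by (auto elim: eventually_mono)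
  then have "g \<in> X" using srf_ae[OF srf sum_in_X[OF srf A, of c] gm] by blast
  moreover have "simple_function M (\<lambda>x. \<Sum>i<n. c i * indicator (A i) x)"
    using A unfolding Sigma_f_def
    by (intro simple_function_sum simple_function_mult simple_function_indicator) auto
  moreover have "AE x in M. g x = (\<Sum>i<n. c i * indicator (A i) x) * f x"
  proof -
    have "\<And>x. (\<Sum>i<n. c i * (f x * indicator (A i) x)) = (\<Sum>i<n. c i * indicator (A i) x) * f x"
      unfolding sum_distrib_right by (intro sum.cong refl) (simp only: mult_ac)
    then show ?thesis using ae by simp
  qed
  ultimately show ?thesis using gm by blast
qed

lemma linf:
  assumes s: "simple_function M s"
  shows "\<exists>L\<ge>0. Linf_norm M s = L \<and> (AE x in M. \<bar>s x\<bar> \<le> L)"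
proof -
  have sm: "s \<in> borel_measurable M" using borel_measurable_simple_function[OF s] .
  have em: "(\<lambda>x. ereal \<bar>s x\<bar>) \<in> borel_measurable M" using sm by measurable
  show ?thesis
  proof (cases "emeasure M (space M) = 0")
    case True
    have "esssup M (\<lambda>x. ereal \<bar>s x\<bar>) = - \<infinity>" using esssup_zero_space[OF True em] .
    moreover have "AE x in M. \<bar>s x\<bar> \<le> 0"
      by (rule AE_I[of _ _ "space M"]) (use True in auto)
    ultimately show ?thesis unfolding Linf_norm_def by auto
  next
    case False
    define B where "B = Max (insert 0 (abs ` s ` space M))"
    have finB: "finite (insert 0 (abs ` s ` space M))"
      using simple_functionD(1)[OF s] by simp
    have sB: "\<And>x. x \<in> space M \<Longrightarrow> \<bar>s x\<bar> \<le> B" unfolding B_def using finB by auto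
    have up: "esssup M (\<lambda>x. ereal \<bar>s x\<bar>) \<le> ereal B"
      by (rule esssup_I[OF em]) (use sB in auto)
    have "esssup M (\<lambda>x. ereal 0) \<le> esssup M (\<lambda>x. ereal \<bar>s x\<bar>)"
      by (rule esssup_mono) auto
    then have lo: "0 \<le> esssup M (\<lambda>x. ereal \<bar>s x\<bar>)"
      using esssup_const[OF False, of "ereal 0"] by (simp add: zero_ereal_def)
    obtain L where L: "esssup M (\<lambda>x. ereal \<bar>s x\<bar>) = ereal L"
      using up lo by (cases "esssup M (\<lambda>x. ereal \<bar>s x\<bar>)") auto
    have "AE x in M. ereal \<bar>s x\<bar> \<le> ereal L" using esssup_AE[of "\<lambda>x. ereal \<bar>s x\<bar>" M] L by simp
    then have "AE x in M. \<bar>s x\<bar> \<le> L" by simp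
    then show ?thesis using L lo unfolding Linf_norm_def by auto
  qed
qed

lemma part1:
  assumes srf: "strictly_rectangular_fs M X N" and fm: "f \<in> borel_measurable M"
    and g: "g \<in> S_fX M X f" and h: "h \<in> S_fX M X f"
    and ae: "AE x in M. 0 \<le> g x \<and> g x \<le> h x"
  shows "N g \<le> N h"
proof -
  obtain \<phi> where gX: "g \<in> X" and gm: "g \<in> borel_measurable M" and \<phi>: "simple_function M \<phi>"
    and g\<phi>: "AE x in M. g x = \<phi> x * f x" using S_repr[OF srf g] by blast
  obtain \<psi> where hX: "h \<in> X" and hm: "h \<in> borel_measurable M" and \<psi>: "simple_function M \<psi>"
    and h\<psi>: "AE x in M. h x = \<psi> x * f x" using S_repr[OF srf h] by blast
  have \<phi>m[measurable]: "\<phi> \<in> borel_measurable M" using borel_measurable_simple_function[OF \<phi>] .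
  have \<psi>m[measurable]: "\<psi> \<in> borel_measurable M" using borel_measurable_simple_function[OF \<psi>] .
  note fm[measurable]
  define t where "t x = max 0 (min 1 (if \<psi> x = 0 \<or> f x = 0 then 0 else \<phi> x / \<psi> x))" for x
  have tm: "t \<in> borel_measurable M" unfolding t_def by measurable
  have tf: "finite (t ` space M)"
    by (rule finite_subset[of _ "insert 0 ((\<lambda>(a,b). max 0 (min 1 (a / b))) ` (\<phi> ` space M \<times> \<psi> ` space M))"])
       (use simple_functionD(1)[OF \<phi>] simple_functionD(1)[OF \<psi>] in \<open>fastforce simp: t_def image_iff\<close>)+
  have T: "(\<lambda>x. t x * h x) \<in> X \<and> N (\<lambda>x. t x * h x) \<le> 1 * N h"
    by (rule core_pos'[OF srf hX tm tf]) (auto simp: t_def)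
  have "AE x in M. t x * h x = g x"
    using ae g\<phi> h\<psi>
  proof (eventually_elim)
    case (elim x)
    show ?case
    proof (cases "\<psi> x = 0 \<or> f x = 0")
      case True
      then show ?thesis using elim by (auto simp: t_def)
    next
      case False
      then have hp: "0 < \<psi> x * f x" using elim by (metis less_eq_real_def mult_eq_0_iff order_trans)
      have "0 \<le> \<phi> x / \<psi> x"
        using elim hp by (metis divide_nonneg_pos mult_divide_mult_cancel_right False)
      moreover have "\<phi> x / \<psi> x \<le> 1"
        using elim hp by (metis divide_le_eq_1_pos mult_divide_mult_cancel_right False)
      ultimately show ?thesis using elim False by (auto simp: t_def)
    qed
  qed
  from srf_ae[OF srf T[THEN conjunct1] gm this] T show ?thesis by simp
qed

lemma alg2: "(a::real) \<noteq> b \<Longrightarrow>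
   \<bar>a*f\<bar> - \<bar>b*f\<bar> = ((\<bar>a\<bar>-\<bar>b\<bar>) * sgn f / (a-b)) * (a*f - b*f)"
proof -
  assume ab: "a \<noteq> b"
  have "((\<bar>a\<bar>-\<bar>b\<bar>) * sgn f / (a-b)) * (a*f - b*f) = (\<bar>a\<bar>-\<bar>b\<bar>) * (sgn f * f)"
  proof -
    have "a*f - b*f = (a-b)*f" by (simp add: left_diff_distrib)
    then show ?thesis using ab by simp
  qed
  also have "\<dots> = \<bar>a*f\<bar> - \<bar>b*f\<bar>"
  proof -
    have "sgn f * f = \<bar>f\<bar>" by (simp add: sgn_real_def)
    then show ?thesis by (simp add: abs_mult left_diff_distrib)
  qed
  finally show ?thesis by simp
qed

lemma bnd2: "(a::real) \<noteq> b \<Longrightarrow> \<bar>(\<bar>a\<bar>-\<bar>b\<bar>) * sgn f / (a-b)\<bar> \<le> 1"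
proof -
  assume ab: "a \<noteq> b"
  have "\<bar>(\<bar>a\<bar>-\<bar>b\<bar>) * sgn f\<bar> \<le> \<bar>a - b\<bar>"
    using abs_triangle_ineq3[of a b] by (simp add: abs_mult abs_sgn_eq)
  then show ?thesis using ab by (simp add: abs_divide divide_le_eq_1)
qed

lemma part2:
  assumes srf: "strictly_rectangular_fs M X N" and fm: "f \<in> borel_measurable M"
    and g: "g \<in> S_fX M X f" and h: "h \<in> S_fX M X f"
  shows "N (\<lambda>x. \<bar>g x\<bar> - \<bar>h x\<bar>) \<le> 4 * N (\<lambda>x. g x - h x)"
proof -
  obtain \<phi> where gX: "g \<in> X" and gm[measurable]: "g \<in> borel_measurable M" and \<phi>: "simple_function M \<phi>"
    and g\<phi>: "AE x in M. g x = \<phi> x * f x" using S_repr[OF srf g] by blast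
  obtain \<psi> where hX: "h \<in> X" and hm[measurable]: "h \<in> borel_measurable M" and \<psi>: "simple_function M \<psi>"
    and h\<psi>: "AE x in M. h x = \<psi> x * f x" using S_repr[OF srf h] by blast
  have \<phi>m[measurable]: "\<phi> \<in> borel_measurable M" using borel_measurable_simple_function[OF \<phi>] .
  have \<psi>m[measurable]: "\<psi> \<in> borel_measurable M" using borel_measurable_simple_function[OF \<psi>] .
  note fm[measurable]
  have h2: "(\<lambda>x. (-1) * h x) \<in> X" using srf_smult[OF srf hX] by blast
  have dX: "(\<lambda>x. g x - h x) \<in> X" using srf_add[OF srf gX h2] by simp
  define r where "r x = (if f x = 0 \<or> \<phi> x = \<psi> x then 0 else (\<bar>\<phi> x\<bar> - \<bar>\<psi> x\<bar>) * sgn (f x) / (\<phi> x - \<psi> x))" for x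
  have rm: "r \<in> borel_measurable M" unfolding r_def by measurable
  have rsub: "r ` space M \<subseteq> insert 0 ((\<lambda>((a,b),e). (\<bar>a\<bar> - \<bar>b\<bar>) * e / (a - b)) ` ((\<phi> ` space M \<times> \<psi> ` space M) \<times> {-1,0,1}))"
  proof
    fix y assume "y \<in> r ` space M"
    then obtain x where x: "x \<in> space M" "y = r x" by auto
    show "y \<in> insert 0 ((\<lambda>((a,b),e). (\<bar>a\<bar> - \<bar>b\<bar>) * e / (a - b)) ` ((\<phi> ` space M \<times> \<psi> ` space M) \<times> {-1,0,1}))"
    proof (cases "f x = 0 \<or> \<phi> x = \<psi> x")
      case True then show ?thesis using x by (simp add: r_def)
    next
      case False
      have "sgn (f x) \<in> {-1,0,1}" by (simp add: sgn_real_def)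
      then show ?thesis using x False
        by (intro insertI2 image_eqI[of _ _ "((\<phi> x, \<psi> x), sgn (f x))"]) (auto simp: r_def)
    qed
  qed
  have rf: "finite (r ` space M)"
    by (rule finite_subset[OF rsub]) (use simple_functionD(1)[OF \<phi>] simple_functionD(1)[OF \<psi>] in simp)
  have R: "(\<lambda>x. r x * (g x - h x)) \<in> X \<and> N (\<lambda>x. r x * (g x - h x)) \<le> 2 * 1 * N (\<lambda>x. g x - h x)"
  proof (rule core_signed[OF srf dX rm rf])
    fix x show "\<bar>r x\<bar> \<le> 1" using bnd2[of "\<phi> x" "\<psi> x" "f x"] by (simp add: r_def)
  qed simp
  have "AE x in M. r x * (g x - h x) = \<bar>g x\<bar> - \<bar>h x\<bar>"
    using g\<phi> h\<psi>
  proof (eventually_elim)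
    case (elim x)
    show ?case
    proof (cases "f x = 0 \<or> \<phi> x = \<psi> x")
      case True
      then show ?thesis using elim by (auto simp: r_def)
    next
      case False
      then show ?thesis using elim alg2[of "\<phi> x" "\<psi> x" "f x"] by (simp add: r_def)
    qed
  qed
  from srf_ae[OF srf R[THEN conjunct1] _ this] R srf_nonneg[OF srf dX] show ?thesis by simp
qed

lemma part3:
  assumes srf: "strictly_rectangular_fs M X N" and s: "simple_function M s" and gX: "g \<in> X"
  shows "N (\<lambda>x. \<bar>s x * g x\<bar>) \<le> Linf_norm M s * N (\<lambda>x. \<bar>g x\<bar>) \<and>
         N (\<lambda>x. s x * g x) \<le> 4 * Linf_norm M s * N g"
proof -
  obtain L where L0: "0 \<le> L" and LL: "Linf_norm M s = L" and aeL: "AE x in M. \<bar>s x\<bar> \<le> L"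
    using linf[OF s] by blast
  have sm[measurable]: "s \<in> borel_measurable M" using borel_measurable_simple_function[OF s] .
  have gm[measurable]: "g \<in> borel_measurable M" using srf_meas[OF srf gX] .
  have sf: "finite (s ` space M)" using simple_functionD(1)[OF s] .
  have sgm: "(\<lambda>x. sgn (g x)) \<in> borel_measurable M" by measurable
  have sgf: "finite ((\<lambda>x. sgn (g x)) ` space M)"
    by (rule finite_subset[of _ "{-1,0,1}"]) (auto simp: sgn_real_def)
  have A: "(\<lambda>x. sgn (g x) * g x) \<in> X"
    using core_signed[OF srf gX sgm sgf, of 1] by (simp add: abs_sgn_eq)
  have "(\<lambda>x. sgn (g x) * g x) = (\<lambda>x. \<bar>g x\<bar>)" by (simp add: sgn_mult_self_eq abs_sgn mult.commute)
  with A have aX: "(\<lambda>x. \<bar>g x\<bar>) \<in> X" by simp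
  define s1 where "s1 x = min \<bar>s x\<bar> L" for x
  have s1m: "s1 \<in> borel_measurable M" unfolding s1_def by measurable
  have s1f: "finite (s1 ` space M)"
    by (rule finite_subset[of _ "(\<lambda>v. min \<bar>v\<bar> L) ` s ` space M"]) (use sf in \<open>auto simp: s1_def\<close>)
  have T1: "(\<lambda>x. s1 x * \<bar>g x\<bar>) \<in> X \<and> N (\<lambda>x. s1 x * \<bar>g x\<bar>) \<le> L * N (\<lambda>x. \<bar>g x\<bar>)"
    by (rule core_pos'[OF srf aX s1m s1f L0]) (auto simp: s1_def L0)
  have "AE x in M. s1 x * \<bar>g x\<bar> = \<bar>s x * g x\<bar>"
    using aeL by eventually_elim (auto simp: s1_def abs_mult)
  from srf_ae[OF srf T1[THEN conjunct1] _ this] T1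
  have P1: "N (\<lambda>x. \<bar>s x * g x\<bar>) \<le> L * N (\<lambda>x. \<bar>g x\<bar>)" by simp
  define s2 where "s2 x = max (-L) (min (s x) L)" for x
  have s2m: "s2 \<in> borel_measurable M" unfolding s2_def by measurable
  have s2f: "finite (s2 ` space M)"
    by (rule finite_subset[of _ "(\<lambda>v. max (-L) (min v L)) ` s ` space M"]) (use sf in \<open>auto simp: s2_def\<close>)
  have T2: "(\<lambda>x. s2 x * g x) \<in> X \<and> N (\<lambda>x. s2 x * g x) \<le> 2 * L * N g"
    by (rule core_signed[OF srf gX s2m s2f L0]) (use L0 in \<open>auto simp: s2_def\<close>)
  have "AE x in M. s2 x * g x = s x * g x"
    using aeL by eventually_elim (auto simp: s2_def)
  from srf_ae[OF srf T2[THEN conjunct1] _ this] T2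
  have "N (\<lambda>x. s x * g x) \<le> 2 * L * N g" by simp
  also have "\<dots> \<le> 4 * L * N g" using L0 srf_nonneg[OF srf gX] by (simp add: mult_right_mono)
  finally show ?thesis using P1 LL by simp
qed

theorem proposition3p4:
  fixes M :: "'a measure" and X :: "('a \<Rightarrow> real) set" and N :: "('a \<Rightarrow> real) \<Rightarrow> real"
  assumes "finite_measure M"
    and "strictly_rectangular_fs M X N"
    and "f \<in> borel_measurable M"
  shows "(\<forall>g\<in>S_fX M X f. \<forall>h\<in>S_fX M X f.
            (AE x in M. 0 \<le> g x \<and> g x \<le> h x) \<longrightarrow> N g \<le> N h)
       \<and> (\<forall>g\<in>S_fX M X f. \<forall>h\<in>S_fX M X f.
            N (\<lambda>x. \<bar>g x\<bar> - \<bar>h x\<bar>) \<le> 4 * N (\<lambda>x. g x - h x))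
       \<and> (f \<in> X \<longrightarrow> (\<forall>s g. simple_function M s \<longrightarrow> g \<in> S_fX M X f \<longrightarrow>
            N (\<lambda>x. \<bar>s x * g x\<bar>) \<le> Linf_norm M s * N (\<lambda>x. \<bar>g x\<bar>) \<and>
            N (\<lambda>x. s x * g x) \<le> 4 * Linf_norm M s * N g))"
  using part1[OF assms(2,3)] part2[OF assms(2,3)] part3[OF assms(2)] S_repr[OF assms(2)]
  by blast

end
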